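(* A TEFX allocation need not exist, for goods or for chores, even when there are $n=2$ agents with identical valuations and only two types of items. That is, there exists an instance with two agents, identical additive valuations, all items goods, items of two types, and no TEFX allocation; and likewise such an instance with all items chores.
   Context: Items $o_1,\dots,o_m$ arrive one per round in this order; agents have additive valuations; in the goods case $v_i(o)\ge 0$, in the chores case $v_i(o)\le 0$ for all agents and items. An allocation $\mathcal{A}=(A_1,\dots,A_n)$ partitions the items; $\mathcal{A}^t$ is its restriction to $o_1,\dots,o_t$. An allocation $(B_1,\dots,B_n)$ is EFX if for all $i,j$ and every good $g\in B_j$, $v_i(B_i)\ge v_i(B_j\setminus\{g\})$ (goods), resp. for every chore $c\in B_i$, $v_i(B_i\setminus\{c\})\ge v_i(B_j)$ (chores). $\mathcal{A}$ is TEFX if $\mathcal{A}^t$ is EFX for every $t$. "Two types of items" means the items can be partitioned into two sets $S_1,S_2$ such that every agent values all items within the same set equally. *)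

theory Defs
  imports Complex_Main
begin

(* Agents are 0..<n, items are 0..<m, item x arrives in round o+1.
   V i x is agent i (additive) value for item o.
   An allocation is a map A from items to agents. *)

definition allocation :: "nat \<Rightarrow> nat \<Rightarrow> (nat \<Rightarrow> nat) \<Rightarrow> bool" where
  "allocation n m A \<longleftrightarrow> (\<forall>x<m. A x < n)"

definition bundle_at :: "(nat \<Rightarrow> nat) \<Rightarrow> nat \<Rightarrow> nat \<Rightarrow> nat set" where
  "bundle_at A t i = {x. x < t \<and> A x = i}"

definition val :: "(nat \<Rightarrow> nat \<Rightarrow> real) \<Rightarrow> nat \<Rightarrow> nat set \<Rightarrow> real" where
  "val V i S = (\<Sum>x\<in>S. V i x)"

definition EFX_goods :: "nat \<Rightarrow> (nat \<Rightarrow> nat \<Rightarrow> real) \<Rightarrow> (nat \<Rightarrow> nat set) \<Rightarrow> bool" where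
  "EFX_goods n V B \<longleftrightarrow>
     (\<forall>i<n. \<forall>j<n. \<forall>g\<in>B j. val V i (B i) \<ge> val V i (B j - {g}))"

definition EFX_chores :: "nat \<Rightarrow> (nat \<Rightarrow> nat \<Rightarrow> real) \<Rightarrow> (nat \<Rightarrow> nat set) \<Rightarrow> bool" where
  "EFX_chores n V B \<longleftrightarrow>
     (\<forall>i<n. \<forall>j<n. \<forall>c\<in>B i. val V i (B i - {c}) \<ge> val V i (B j))"

definition TEFX_goods :: "nat \<Rightarrow> nat \<Rightarrow> (nat \<Rightarrow> nat \<Rightarrow> real) \<Rightarrow> (nat \<Rightarrow> nat) \<Rightarrow> bool" where
  "TEFX_goods n m V A \<longleftrightarrow> allocation n m A \<and> (\<forall>t\<le>m. EFX_goods n V (bundle_at A t))"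

definition TEFX_chores :: "nat \<Rightarrow> nat \<Rightarrow> (nat \<Rightarrow> nat \<Rightarrow> real) \<Rightarrow> (nat \<Rightarrow> nat) \<Rightarrow> bool" where
  "TEFX_chores n m V A \<longleftrightarrow> allocation n m A \<and> (\<forall>t\<le>m. EFX_chores n V (bundle_at A t))"

definition goods_instance :: "nat \<Rightarrow> nat \<Rightarrow> (nat \<Rightarrow> nat \<Rightarrow> real) \<Rightarrow> bool" where
  "goods_instance n m V \<longleftrightarrow> (\<forall>i<n. \<forall>x<m. V i x \<ge> 0)"

definition chores_instance :: "nat \<Rightarrow> nat \<Rightarrow> (nat \<Rightarrow> nat \<Rightarrow> real) \<Rightarrow> bool" where
  "chores_instance n m V \<longleftrightarrow> (\<forall>i<n. \<forall>x<m. V i x \<le> 0)"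

definition identical_valuations :: "nat \<Rightarrow> nat \<Rightarrow> (nat \<Rightarrow> nat \<Rightarrow> real) \<Rightarrow> bool" where
  "identical_valuations n m V \<longleftrightarrow> (\<forall>i<n. \<forall>j<n. \<forall>x<m. V i x = V j x)"

definition two_types :: "nat \<Rightarrow> nat \<Rightarrow> (nat \<Rightarrow> nat \<Rightarrow> real) \<Rightarrow> bool" where
  "two_types n m V \<longleftrightarrow> (\<exists>S1 S2. S1 \<union> S2 = {..<m} \<and> S1 \<inter> S2 = {} \<and> S1 \<noteq> {} \<and> S2 \<noteq> {} \<and>
     (\<forall>i<n. (\<forall>a\<in>S1. \<forall>b\<in>S1. V i a = V i b) \<and> (\<forall>a\<in>S2. \<forall>b\<in>S2. V i a = V i b)))"

end

theory Submission
  imports Defs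
begin

lemma lt2: "{x::nat. x < 2 \<and> P x} = {x\<in>{0,1}. P x}" by auto
lemma lt3: "{x::nat. x < 3 \<and> P x} = {x\<in>{0,1,2}. P x}" by auto

definition Vg :: "nat \<Rightarrow> nat \<Rightarrow> real" where "Vg i x = (if x = 2 then 2 else 1)"
definition Vc :: "nat \<Rightarrow> nat \<Rightarrow> real" where "Vc i x = (if x = 2 then -2 else -1)"

lemma b2: "bundle_at A 2 i = (if A 0 = i then {0} else {}) \<union> (if A 1 = i then {1} else {})"
  unfolding bundle_at_def by (rule set_eqI) (case_tac "x = 0"; case_tac "x = 1"; case_tac "x = 2"; auto)
lemma b3: "bundle_at A 3 i = (if A 0 = i then {0} else {}) \<union> (if A 1 = i then {1} else {}) \<union> (if A 2 = i then {2} else {})"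
  unfolding bundle_at_def by (rule set_eqI) (case_tac "x = 0"; case_tac "x = 1"; case_tac "x = 2"; auto)

lemma bits: "(a::nat) < 2 \<Longrightarrow> a = 0 \<or> a = 1" by auto

lemma goods_no: "\<not> TEFX_goods 2 3 Vg A"
proof
  assume T: "TEFX_goods 2 3 Vg A"
  have a: "A 0 < 2" "A 1 < 2" "A 2 < 2" using T by (auto simp: TEFX_goods_def allocation_def)
  have e2: "EFX_goods 2 Vg (bundle_at A 2)" and e3: "EFX_goods 2 Vg (bundle_at A 3)"
    using T by (auto simp: TEFX_goods_def)
  from bits[OF a(1)] bits[OF a(2)] bits[OF a(3)] show False
    using e2[unfolded EFX_goods_def, rule_format, of "1 - A 0" "A 0" 0]
      e3[unfolded EFX_goods_def, rule_format, of "1 - A 2" "A 2" "if A 0 = A 2 then 0 else 1"]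
    by (auto simp: b2 b3 val_def Vg_def insert_Diff_if)
qed

lemma chores_no: "\<not> TEFX_chores 2 3 Vc A"
proof
  assume T: "TEFX_chores 2 3 Vc A"
  have a: "A 0 < 2" "A 1 < 2" "A 2 < 2" using T by (auto simp: TEFX_chores_def allocation_def)
  have e2: "EFX_chores 2 Vc (bundle_at A 2)" and e3: "EFX_chores 2 Vc (bundle_at A 3)"
    using T by (auto simp: TEFX_chores_def)
  from bits[OF a(1)] bits[OF a(2)] bits[OF a(3)] show False
    using e2[unfolded EFX_chores_def, rule_format, of "A 0" "1 - A 0" 0]
      e3[unfolded EFX_chores_def, rule_format, of "A 2" "1 - A 2" "if A 0 = A 2 then 0 else 1"]
    by (auto simp: b2 b3 val_def Vc_def insert_Diff_if)
qed

lemma tt: "two_types 2 3 V" if "\<And>i. V i 0 = V i 1" for V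
  unfolding two_types_def
  by (rule exI[of _ "{0,1}"], rule exI[of _ "{2}"]) (auto simp: that)

theorem proposition1:
  shows "(\<exists>m V. goods_instance 2 m V \<and> identical_valuations 2 m V \<and> two_types 2 m V \<and>
            \<not> (\<exists>A. TEFX_goods 2 m V A))
       \<and> (\<exists>m V. chores_instance 2 m V \<and> identical_valuations 2 m V \<and> two_types 2 m V \<and>
            \<not> (\<exists>A. TEFX_chores 2 m V A))"
proof
  show "\<exists>m V. goods_instance 2 m V \<and> identical_valuations 2 m V \<and> two_types 2 m V \<and>
            \<not> (\<exists>A. TEFX_goods 2 m V A)"
    by (rule exI[of _ 3], rule exI[of _ Vg])
      (auto simp: goods_no goods_instance_def identical_valuations_def Vg_def intro!: tt)
  show "\<exists>m V. chores_instance 2 m V \<and> identical_valuations 2 m V \<and> two_types 2 m V \<and>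
            \<not> (\<exists>A. TEFX_chores 2 m V A)"
    by (rule exI[of _ 3], rule exI[of _ Vc])
      (auto simp: chores_no chores_instance_def identical_valuations_def Vc_def intro!: tt)
qed

end
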